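(* Let $\theta,\rho\in(0,1)$ and let $\mathcal I$ be a local quadrature rule with positive weights that is exact for constants (i.e. $\sum_i w_i=\mathrm{vol}(K)$ on each box $K$). Let $\Omega\in\mathbb{IR}^d$ be a box with nonempty interior, $f:\Omega\to\mathbb R$ continuous, and $F$ an interval enclosure of $f$ that is Hölder continuous on $\Omega$ with constant $C>0$ and exponent $\gamma\in(0,1]$. Run AdaQuad with quadrature rule $\mathcal I$, marking rule $\mathrm{D\ddot orfler}_\theta$ and refinement rule $\mathrm{H\ddot older}_\rho$ (using $F,C,\gamma$). Then for all $n\in\mathbb N_0$ $$\Big|\int_\Omega f(x)\,dx-\mathrm Q_n\Big|\le\eta_n\quad\text{and}\quad \eta_{n+1}\le(1-\theta(1-\rho))\,\eta_n,$$ in particular $\eta_n\to0$.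
   Context: Intervals: $\mathbb{IR}=\{[\underline X,\overline X]\subset\mathbb R:\underline X\le\overline X\}$; $\mathbb{IR}^N$ denotes boxes $K=K_1\times\dots\times K_N$. Width $w([\underline X,\overline X])=\overline X-\underline X$, and for a box $w(K)=\max_iw(K_i)$. For a box $\Omega$ and $\phi:\Omega\to\mathbb R^m$, a map $F$ from boxes $K\subset\Omega$ to $\mathbb{IR}^m$ is an interval enclosure of $\phi$ if it is inclusion isotonic ($K'\subset K\Rightarrow F(K')\subset F(K)$) and $\phi(K)\subset F(K)$ for all boxes $K\subset\Omega$. $F$ is Hölder continuous on $\Omega$ with exponent $\gamma$ and constant $C$ if $w(F(K))\le Cw(K)^\gamma$ for all boxes $K\subset\Omega$. A local quadrature rule assigns $\mathcal I(f,K)=\sum_{i=1}^Nw_if(x_i)$ with weights $w_i$ and nodes $x_i\in K$. A partition of $\Omega$ is a finite set of boxes covering $\Omega$ with pairwise disjoint interiors. AdaQuad (with marking rule $\mathcal M$ and refinement rule $\mathcal R$): $\mathcal P_0=\{\Omega\}$; given $\mathcal P_n$, set $\eta_K=w(F(K))\mathrm{vol}(K)$, $\widetilde{\mathcal P}_n=\mathcal M(\mathcal P_n,(\eta_K))$, $\mathcal P_{n+1}=(\mathcal P_n\setminus\widetilde{\mathcal P}_n)\cup\bigcup_{K\in\widetilde{\mathcal P}_n}\mathcal R(K)$; outputs $\mathrm Q_n=\sum_{K\in\mathcal P_n}\mathcal I(f,K)$, $\eta_n=\sum_{K\in\mathcal P_n}w(F(K))\mathrm{vol}(K)$. $\mathrm{D\ddot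 orfler}_\theta$: starting from the empty marked set, repeatedly add to the marked set all unmarked elements whose indicator equals the maximum indicator among unmarked elements, as long as the sum of marked indicators is $<\theta$ times the total sum of indicators; return the marked set. $\mathrm{H\ddot older}_\rho$: for a box $K=K_1\times\dots\times K_d$ with $\eta_K=w(F(K))\mathrm{vol}(K)$: if $\eta_K=0$ return $\{K\}$; otherwise, for each $i$ let $l_i=w(K_i)$ and $m_i=\lceil l_i(C\,\mathrm{vol}(K)/(\rho\eta_K))^{1/\gamma}\rceil$, split $K_i$ into $m_i$ equal consecutive closed subintervals, and return the set of all $\prod_im_i$ product boxes formed from these subintervals. *)

theory Defs
  imports "HOL-Analysis.Analysis"
begin

text \<open>A box in R^d (d = CARD('n)) is represented by its pair of corners (lower, upper);
  it is a genuine box when lower \<le> upper componentwise, and its point set is cbox.\<close>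

type_synonym 'n box = "(real^'n) \<times> (real^'n)"

definition is_box :: "'n::finite box \<Rightarrow> bool" where
  "is_box K \<longleftrightarrow> (\<forall>i. fst K $ i \<le> snd K $ i)"

definition box_set :: "'n::finite box \<Rightarrow> (real^'n) set" where
  "box_set K = cbox (fst K) (snd K)"

definition box_width :: "'n::finite box \<Rightarrow> real" where
  "box_width K = Max (range (\<lambda>i. snd K $ i - fst K $ i))"

definition box_vol :: "'n::finite box \<Rightarrow> real" where
  "box_vol K = (\<Prod>i\<in>UNIV. snd K $ i - fst K $ i)"

type_synonym ival = "real \<times> real"

definition iwidth :: "ival \<Rightarrow> real" where
  "iwidth X = snd X - fst X"

definition iset :: "ival \<Rightarrow> real set" where
  "iset X = {fst X..snd X}"

definition interval_enclosure ::
  "'n::finite box \<Rightarrow> (real^'n \<Rightarrow> real) \<Rightarrow> ('n box \<Rightarrow> ival) \<Rightarrow> bool" where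
  "interval_enclosure \<Omega> \<phi> F \<longleftrightarrow>
     (\<forall>K. is_box K \<and> box_set K \<subseteq> box_set \<Omega> \<longrightarrow>
        fst (F K) \<le> snd (F K) \<and> \<phi> ` box_set K \<subseteq> iset (F K) \<and>
        (\<forall>K'. is_box K' \<and> box_set K' \<subseteq> box_set K \<longrightarrow> iset (F K') \<subseteq> iset (F K)))"

definition hoelder_continuous ::
  "'n::finite box \<Rightarrow> ('n box \<Rightarrow> ival) \<Rightarrow> real \<Rightarrow> real \<Rightarrow> bool" where
  "hoelder_continuous \<Omega> F C \<gamma> \<longleftrightarrow>
     (\<forall>K. is_box K \<and> box_set K \<subseteq> box_set \<Omega> \<longrightarrow> iwidth (F K) \<le> C * box_width K powr \<gamma>)"

definition local_quad_rule :: "('n::finite box \<Rightarrow> (real \<times> (real^'n)) list) \<Rightarrow> bool" where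
  "local_quad_rule R \<longleftrightarrow> (\<forall>K. is_box K \<longrightarrow> (\<forall>(w, x)\<in>set (R K). x \<in> box_set K))"

definition positive_weights :: "('n::finite box \<Rightarrow> (real \<times> (real^'n)) list) \<Rightarrow> bool" where
  "positive_weights R \<longleftrightarrow> (\<forall>K. is_box K \<longrightarrow> (\<forall>(w, x)\<in>set (R K). w > 0))"

definition exact_for_constants :: "('n::finite box \<Rightarrow> (real \<times> (real^'n)) list) \<Rightarrow> bool" where
  "exact_for_constants R \<longleftrightarrow> (\<forall>K. is_box K \<longrightarrow> sum_list (map fst (R K)) = box_vol K)"

definition quad :: "('n::finite box \<Rightarrow> (real \<times> (real^'n)) list) \<Rightarrow> (real^'n \<Rightarrow> real) \<Rightarrow> 'n box \<Rightarrow> real" where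
  "quad R f K = sum_list (map (\<lambda>(w, x). w * f x) (R K))"

definition dorfler_step :: "'a set \<Rightarrow> ('a \<Rightarrow> real) \<Rightarrow> 'a set \<Rightarrow> 'a set" where
  "dorfler_step P \<eta> M = M \<union> {K \<in> P - M. \<eta> K = Max (\<eta> ` (P - M))}"

definition dorfler :: "real \<Rightarrow> 'a set \<Rightarrow> ('a \<Rightarrow> real) \<Rightarrow> 'a set" where
  "dorfler \<theta> P \<eta> =
     (let it = (\<lambda>k. (dorfler_step P \<eta> ^^ k) {})
      in it (LEAST k. \<not> (sum \<eta> (it k) < \<theta> * sum \<eta> P)))"

definition hoelder_refine ::
  "real \<Rightarrow> real \<Rightarrow> real \<Rightarrow> ('n::finite box \<Rightarrow> ival) \<Rightarrow> 'n box \<Rightarrow> 'n box set" where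
  "hoelder_refine \<rho> C \<gamma> F K =
     (let \<eta> = iwidth (F K) * box_vol K in
      if \<eta> = 0 then {K} else
      (let l = (\<lambda>i. snd K $ i - fst K $ i);
           m = (\<lambda>i. nat \<lceil>l i * (C * box_vol K / (\<rho> * \<eta>)) powr (1 / \<gamma>)\<rceil>)
       in (\<lambda>j. ((\<chi> i. fst K $ i + real (j i) * l i / real (m i)),
                (\<chi> i. fst K $ i + real (j i + 1) * l i / real (m i))))
          ` {j. \<forall>i. j i < m i}))"

primrec adaquad_partition ::
  "('n::finite box set \<Rightarrow> ('n box \<Rightarrow> real) \<Rightarrow> 'n box set) \<Rightarrow> ('n box \<Rightarrow> 'n box set)
   \<Rightarrow> ('n box \<Rightarrow> ival) \<Rightarrow> 'n box \<Rightarrow> nat \<Rightarrow> 'n box set" where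
  "adaquad_partition M R F \<Omega> 0 = {\<Omega>}"
| "adaquad_partition M R F \<Omega> (Suc n) =
     (let P = adaquad_partition M R F \<Omega> n;
          Pm = M P (\<lambda>K. iwidth (F K) * box_vol K)
      in (P - Pm) \<union> \<Union> (R ` Pm))"

definition adaquad_Q ::
  "('n::finite box \<Rightarrow> (real \<times> (real^'n)) list) \<Rightarrow> (real^'n \<Rightarrow> real)
   \<Rightarrow> ('n box set \<Rightarrow> ('n box \<Rightarrow> real) \<Rightarrow> 'n box set) \<Rightarrow> ('n box \<Rightarrow> 'n box set)
   \<Rightarrow> ('n box \<Rightarrow> ival) \<Rightarrow> 'n box \<Rightarrow> nat \<Rightarrow> real" where
  "adaquad_Q Rq f M R F \<Omega> n = (\<Sum>K\<in>adaquad_partition M R F \<Omega> n. quad Rq f K)"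

definition adaquad_eta ::
  "('n::finite box set \<Rightarrow> ('n box \<Rightarrow> real) \<Rightarrow> 'n box set) \<Rightarrow> ('n box \<Rightarrow> 'n box set)
   \<Rightarrow> ('n box \<Rightarrow> ival) \<Rightarrow> 'n box \<Rightarrow> nat \<Rightarrow> real" where
  "adaquad_eta M R F \<Omega> n = (\<Sum>K\<in>adaquad_partition M R F \<Omega> n. iwidth (F K) * box_vol K)"

end

theory Submission
  imports Defs "HOL-Library.FuncSet"
begin


lemma dorfler_it_sub:
  "(dorfler_step P \<eta> ^^ k) {} \<subseteq> P"
  by (induction k) (auto simp: dorfler_step_def)

lemma dorfler_it_grow:
  assumes "finite P"
  shows "k \<le> card ((dorfler_step P \<eta> ^^ k) {}) \<or> (dorfler_step P \<eta> ^^ k) {} = P"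
proof (induction k)
  case 0 then show ?case by simp
next
  case (Suc k)
  define M where "M = (dorfler_step P \<eta> ^^ k) {}"
  have MP: "M \<subseteq> P" unfolding M_def by (rule dorfler_it_sub)
  show ?case
  proof (cases "M = P")
    case True
    have "(dorfler_step P \<eta> ^^ Suc k) {} = dorfler_step P \<eta> M" by (simp add: M_def)
    also have "\<dots> = P" using True by (simp add: dorfler_step_def)
    finally show ?thesis by simp
  next
    case False
    then have ne: "P - M \<noteq> {}" using MP by blast
    have fin: "finite (P - M)" using assms by simp
    have "Max (\<eta> ` (P - M)) \<in> \<eta> ` (P - M)" using ne fin by (intro Max_in) auto
    then obtain K where K: "K \<in> P - M" "\<eta> K = Max (\<eta> ` (P - M))" by auto
    have sub: "insert K M \<subseteq> dorfler_step P \<eta> M" using K by (auto simp: dorfler_step_def)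
    have finM: "finite M" using MP assms finite_subset by blast
    have "card (insert K M) = Suc (card M)" using K finM by simp
    moreover have "card (insert K M) \<le> card (dorfler_step P \<eta> M)"
      by (rule card_mono) (use assms dorfler_it_sub[where P=P and \<eta>=\<eta> and k="Suc k"] sub in \<open>auto simp: M_def intro: finite_subset\<close>)
    moreover have "k \<le> card M" using Suc.IH False M_def by auto
    ultimately show ?thesis by (simp add: M_def)
  qed
qed

lemma dorfler_props:
  assumes "finite P" "\<And>K. K \<in> P \<Longrightarrow> \<eta> K \<ge> 0" "\<theta> \<le> 1"
  shows "dorfler \<theta> P \<eta> \<subseteq> P" "\<theta> * sum \<eta> P \<le> sum \<eta> (dorfler \<theta> P \<eta>)"
proof -
  let ?it = "\<lambda>k. (dorfler_step P \<eta> ^^ k) {}"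
  have "?it (card P) = P"
    using dorfler_it_grow[OF assms(1), where k="card P" and \<eta>=\<eta>] dorfler_it_sub[where P=P and \<eta>=\<eta> and k="card P"] assms(1)
    by (meson card_seteq)
  moreover have "\<theta> * sum \<eta> P \<le> sum \<eta> P"
    using assms sum_nonneg[of P \<eta>] using mult_right_mono[of \<theta> 1 "sum \<eta> P"] by simp
  ultimately have ex: "\<exists>k. \<not> (sum \<eta> (?it k) < \<theta> * sum \<eta> P)" by (metis not_less)
  show "dorfler \<theta> P \<eta> \<subseteq> P" unfolding dorfler_def Let_def by (rule dorfler_it_sub)
  show "\<theta> * sum \<eta> P \<le> sum \<eta> (dorfler \<theta> P \<eta>)"
    using LeastI_ex[OF ex] unfolding dorfler_def Let_def by simp
qed



definition nondeg :: "'n::finite box \<Rightarrow> bool" where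
  "nondeg K \<longleftrightarrow> (\<forall>i. fst K $ i < snd K $ i)"

definition part :: "(real^'n) set \<Rightarrow> 'n::finite box set \<Rightarrow> bool" where
  "part S P \<longleftrightarrow> finite P \<and> (\<forall>K\<in>P. nondeg K \<and> box_set K \<subseteq> S) \<and>
     (\<forall>K1\<in>P. \<forall>K2\<in>P. K1 \<noteq> K2 \<longrightarrow> interior (box_set K1) \<inter> interior (box_set K2) = {}) \<and>
     \<Union>(box_set ` P) = S"

lemma nondeg_interior_ne: "nondeg K \<Longrightarrow> interior (box_set K) \<noteq> {}"
proof -
  assume "nondeg K"
  then have "(\<chi> i. (fst K $ i + snd K $ i) / 2) \<in> box (fst K) (snd K)"
    by (auto simp: mem_box_cart nondeg_def)
  then show ?thesis by (auto simp: box_set_def)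
qed

lemma nondeg_is_box: "nondeg K \<Longrightarrow> is_box K"
  by (auto simp: nondeg_def is_box_def less_imp_le)

lemma part_inj: "part S P \<Longrightarrow> inj_on box_set P"
proof (rule inj_onI, rule ccontr)
  fix K1 K2 assume p: "part S P" and K: "K1 \<in> P" "K2 \<in> P" "box_set K1 = box_set K2" "K1 \<noteq> K2"
  then have "interior (box_set K1) \<inter> interior (box_set K2) = {}" unfolding part_def by blast
  moreover have "interior (box_set K1) \<noteq> {}" using p K nondeg_interior_ne unfolding part_def by blast
  ultimately show False using K by simp
qed

lemma part_division: "part S P \<Longrightarrow> box_set ` P division_of S"
proof (rule division_ofI)
  assume p: "part S P"
  show "finite (box_set ` P)" using p unfolding part_def by blast
  show "\<And>K. K \<in> box_set ` P \<Longrightarrow> K \<subseteq> S" using p unfolding part_def by blast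
  show "\<And>K. K \<in> box_set ` P \<Longrightarrow> K \<noteq> {}" using p nondeg_interior_ne unfolding part_def
    by (metis (no_types, lifting) empty_subsetI imageE interior_empty)
  show "\<And>K. K \<in> box_set ` P \<Longrightarrow> \<exists>a b. K = cbox a b" by (auto simp: box_set_def)
  show "\<And>K1 K2. K1 \<in> box_set ` P \<Longrightarrow> K2 \<in> box_set ` P \<Longrightarrow> K1 \<noteq> K2 \<Longrightarrow> interior K1 \<inter> interior K2 = {}"
    using p unfolding part_def by (metis imageE)
  show "\<Union>(box_set ` P) = S" using p unfolding part_def by blast
qed

lemma part_refine:
  assumes "part S P" "Pm \<subseteq> P" "\<And>K. K \<in> Pm \<Longrightarrow> part (box_set K) (R K)"
  shows "part S ((P - Pm) \<union> \<Union>(R ` Pm))"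
proof -
  have finP: "finite P" and PK: "\<And>K. K \<in> P \<Longrightarrow> nondeg K \<and> box_set K \<subseteq> S"
    and dis: "\<And>K1 K2. K1 \<in> P \<Longrightarrow> K2 \<in> P \<Longrightarrow> K1 \<noteq> K2 \<Longrightarrow> interior (box_set K1) \<inter> interior (box_set K2) = {}"
    and un: "\<Union>(box_set ` P) = S"
    using assms(1) unfolding part_def by auto
  have RK: "\<And>K. K \<in> Pm \<Longrightarrow> finite (R K) \<and> (\<forall>k\<in>R K. nondeg k \<and> box_set k \<subseteq> box_set K) \<and>
     (\<forall>K1\<in>R K. \<forall>K2\<in>R K. K1 \<noteq> K2 \<longrightarrow> interior (box_set K1) \<inter> interior (box_set K2) = {}) \<and>
     \<Union>(box_set ` R K) = box_set K" using assms(3) unfolding part_def by blast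
  have fin: "finite ((P - Pm) \<union> \<Union>(R ` Pm))"
    using finP assms(2) RK by (meson finite_Diff finite_UN finite_Un finite_subset)
  have el: "\<forall>K\<in>(P - Pm) \<union> \<Union>(R ` Pm). nondeg K \<and> box_set K \<subseteq> S"
  proof
    fix K assume "K \<in> (P - Pm) \<union> \<Union>(R ` Pm)"
    then show "nondeg K \<and> box_set K \<subseteq> S"
    proof
      assume "K \<in> P - Pm" then show ?thesis using PK by blast
    next
      assume "K \<in> \<Union>(R ` Pm)"
      then obtain A where A: "A \<in> Pm" "K \<in> R A" by blast
      then show ?thesis using RK[OF A(1)] PK[of A] assms(2) by blast
    qed
  qed
  have di: "\<forall>K1\<in>(P - Pm) \<union> \<Union>(R ` Pm). \<forall>K2\<in>(P - Pm) \<union> \<Union>(R ` Pm). K1 \<noteq> K2 \<longrightarrow>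
      interior (box_set K1) \<inter> interior (box_set K2) = {}"
  proof (intro ballI impI)
    fix K1 K2 assume K1: "K1 \<in> (P - Pm) \<union> \<Union>(R ` Pm)" and K2: "K2 \<in> (P - Pm) \<union> \<Union>(R ` Pm)"
      and ne: "K1 \<noteq> K2"
    have ob: "\<exists>A. A \<in> P \<and> interior (box_set K) \<subseteq> interior (box_set A) \<and>
      (A \<in> Pm \<longrightarrow> K \<in> R A) \<and> (A \<notin> Pm \<longrightarrow> K = A)" if KK: "K \<in> (P - Pm) \<union> \<Union>(R ` Pm)" for K
    proof (cases "K \<in> P - Pm")
      case True then show ?thesis by blast
    next
      case False
      then obtain A where A: "A \<in> Pm" "K \<in> R A" using KK by blast
      then have "box_set K \<subseteq> box_set A" using RK by blast
      then show ?thesis using A assms(2) interior_mono by blast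
    qed
    obtain A1 where A1: "A1 \<in> P" "interior (box_set K1) \<subseteq> interior (box_set A1)"
      "A1 \<in> Pm \<longrightarrow> K1 \<in> R A1" "A1 \<notin> Pm \<longrightarrow> K1 = A1"
      using ob[OF K1] by blast
    obtain A2 where A2: "A2 \<in> P" "interior (box_set K2) \<subseteq> interior (box_set A2)"
      "A2 \<in> Pm \<longrightarrow> K2 \<in> R A2" "A2 \<notin> Pm \<longrightarrow> K2 = A2"
      using ob[OF K2] by blast
    show "interior (box_set K1) \<inter> interior (box_set K2) = {}"
    proof (cases "A1 = A2")
      case True
      show ?thesis
      proof (cases "A1 \<in> Pm")
        case True
        then have "K1 \<in> R A1" "K2 \<in> R A1" using A1 A2 \<open>A1 = A2\<close> by auto
        then show ?thesis using RK[OF True] ne by blast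
      next
        case False
        then show ?thesis using A1 A2 ne \<open>A1 = A2\<close> by auto
      qed
    next
      case False
      then show ?thesis using dis[OF A1(1) A2(1)] A1(2) A2(2) by blast
    qed
  qed
  have "\<Union>(box_set ` ((P - Pm) \<union> \<Union>(R ` Pm))) = \<Union>(box_set ` (P - Pm)) \<union> \<Union>(box_set ` Pm)"
    using RK by auto
  also have "\<dots> = S" using un assms(2) by blast
  finally show ?thesis using fin el di unfolding part_def by blast
qed



definition grid :: "'n::finite box \<Rightarrow> ('n \<Rightarrow> nat) \<Rightarrow> ('n \<Rightarrow> nat) \<Rightarrow> 'n box" where
  "grid K m j = ((\<chi> i. fst K $ i + real (j i) * (snd K $ i - fst K $ i) / real (m i)),
                (\<chi> i. fst K $ i + real (j i + 1) * (snd K $ i - fst K $ i) / real (m i)))"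

lemma cover1:
  fixes l y :: real and m :: nat
  assumes "l > 0" "m > 0" "0 \<le> y" "y \<le> l"
  shows "\<exists>k<m. real k * l / real m \<le> y \<and> y \<le> real (k + 1) * l / real m"
proof -
  define t where "t = y * real m / l"
  have t0: "0 \<le> t" using assms by (simp add: t_def)
  have tm: "t \<le> real m" using assms by (simp add: t_def field_simps mult_left_mono)
  define k where "k = min (m - 1) (nat \<lfloor>t\<rfloor>)"
  have km: "k < m" using assms by (simp add: k_def)
  have kt: "real k \<le> t"
  proof -
    have "real (nat \<lfloor>t\<rfloor>) \<le> t" using t0 by linarith
    then show ?thesis unfolding k_def by linarith
  qed
  have tk: "t \<le> real k + 1"
  proof (cases "nat \<lfloor>t\<rfloor> \<le> m - 1")
    case True
    then have "k = nat \<lfloor>t\<rfloor>" by (simp add: k_def)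
    then show ?thesis using t0 by linarith
  next
    case False
    then have "k = m - 1" by (simp add: k_def)
    then show ?thesis using tm assms(2) by (simp add: of_nat_diff)
  qed
  have y: "y = t * l / real m" using assms by (simp add: t_def)
  have "real k * l / real m \<le> y" unfolding y using assms kt
    by (simp add: divide_right_mono mult_right_mono)
  moreover have "y \<le> real (k + 1) * l / real m" unfolding y using assms tk
    by (simp add: divide_right_mono mult_right_mono)
  ultimately show ?thesis using km by blast
qed

lemma grid_part:
  assumes "nondeg K" "\<And>i. m i > 0"
  shows "part (box_set K) (grid K m ` {j. \<forall>i. j i < m i})"
proof -
  let ?J = "{j. \<forall>i. j i < m i}"
  let ?l = "\<lambda>i. snd K $ i - fst K $ i"
  have l0: "\<And>i. ?l i > 0" using assms(1) by (simp add: nondeg_def)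
  have finJ: "finite ?J"
  proof -
    have "?J = Pi\<^sub>E UNIV (\<lambda>i. {..<m i})" by (auto simp: PiE_UNIV_domain)
    then show ?thesis by (simp add: finite_PiE)
  qed
  have lo: "\<And>j i. fst (grid K m j) $ i = fst K $ i + real (j i) * ?l i / real (m i)"
    and hi: "\<And>j i. snd (grid K m j) $ i = fst K $ i + real (j i + 1) * ?l i / real (m i)"
    by (simp_all add: grid_def)
  have step: "\<And>k i. real k * ?l i / real (m i) < real (k + 1) * ?l i / real (m i)"
    using l0 assms(2) by (simp add: divide_strict_right_mono)
  have nd: "\<And>j. nondeg (grid K m j)" unfolding nondeg_def lo hi using step by simp
  have sub: "\<And>j. j \<in> ?J \<Longrightarrow> box_set (grid K m j) \<subseteq> box_set K"
  proof -
    fix j assume j: "j \<in> ?J"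
    have a: "\<And>i. fst K $ i \<le> fst (grid K m j) $ i" unfolding lo using l0 by (simp add: less_imp_le)
    have b: "\<And>i. snd (grid K m j) $ i \<le> snd K $ i"
    proof -
      fix i
      have "j i + 1 \<le> m i" using j by (simp add: Suc_leI)
      then have "real (j i + 1) \<le> real (m i)" by linarith
      then have "real (j i + 1) * ?l i \<le> real (m i) * ?l i" using l0 mult_right_mono less_imp_le by blast
      then have "real (j i + 1) * ?l i / real (m i) \<le> ?l i" using assms(2)[of i] by (simp add: field_simps)
      then show "snd (grid K m j) $ i \<le> snd K $ i" unfolding hi by simp
    qed
    show "box_set (grid K m j) \<subseteq> box_set K" unfolding box_set_def
      using a b by (auto simp: mem_box_cart) (meson order_trans)+
  qed
  have dis: "interior (box_set (grid K m j1)) \<inter> interior (box_set (grid K m j2)) = {}"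
    if ne: "grid K m j1 \<noteq> grid K m j2" for j1 j2
  proof -
    obtain i where i: "j1 i \<noteq> j2 i" using ne by (metis ext)
    have key: "snd (grid K m ja) $ i \<le> fst (grid K m jb) $ i" if "ja i < jb i" for ja jb
    proof -
      have "ja i + 1 \<le> jb i" using that by simp
      then have "real (ja i + 1) \<le> real (jb i)" by linarith
      then have "real (ja i + 1) * ?l i \<le> real (jb i) * ?l i" using l0 mult_right_mono less_imp_le by blast
      then show ?thesis unfolding lo hi using assms(2)[of i] by (simp add: divide_right_mono)
    qed
    show ?thesis
    proof (rule ccontr)
      assume "\<not> ?thesis"
      then obtain x where x: "x \<in> box (fst (grid K m j1)) (snd (grid K m j1))"
        "x \<in> box (fst (grid K m j2)) (snd (grid K m j2))" by (auto simp: box_set_def)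
      from x have x1: "fst (grid K m j1) $ i < x $ i" "x $ i < snd (grid K m j1) $ i"
        and x2: "fst (grid K m j2) $ i < x $ i" "x $ i < snd (grid K m j2) $ i"
        by (auto simp: mem_box_cart)
      show False
      proof (cases "j1 i < j2 i")
        case True then show False using key[of j1 j2] True x1 x2 by linarith
      next
        case False then have "j2 i < j1 i" using i by simp
        then show False using key[of j2 j1] x1 x2 by linarith
      qed
    qed
  qed
  have cov: "box_set K \<subseteq> \<Union>(box_set ` grid K m ` ?J)"
  proof
    fix x assume x: "x \<in> box_set K"
    then have xi: "\<And>i. fst K $ i \<le> x $ i \<and> x $ i \<le> snd K $ i" by (simp add: box_set_def mem_box_cart)
    have "\<forall>i. \<exists>k<m i. real k * ?l i / real (m i) \<le> x $ i - fst K $ i \<and>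
        x $ i - fst K $ i \<le> real (k + 1) * ?l i / real (m i)"
      using cover1 l0 assms(2) xi by (simp add: cover1)
    then obtain j where j: "\<And>i. j i < m i \<and> real (j i) * ?l i / real (m i) \<le> x $ i - fst K $ i \<and>
        x $ i - fst K $ i \<le> real (j i + 1) * ?l i / real (m i)" by metis
    then have "j \<in> ?J" by simp
    moreover have "x \<in> box_set (grid K m j)" unfolding box_set_def mem_box_cart lo hi
      using j by (auto simp: algebra_simps)
    ultimately show "x \<in> \<Union>(box_set ` grid K m ` ?J)" by blast
  qed
  show ?thesis unfolding part_def
    using finJ nd sub dis cov by blast
qed



lemma gstep: "(a::real) + real (k + 1) * l / M - (a + real k * l / M) = l / M"
proof -
  have "real (k + 1) * l / M - real k * l / M = (real (k + 1) * l - real k * l) / M"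
    by (rule diff_divide_distrib[symmetric])
  also have "\<dots> = l / M" by (simp add: algebra_simps)
  finally show ?thesis by simp
qed

lemma grid_vol: "box_vol (grid K m j) = (\<Prod>i\<in>UNIV. (snd K $ i - fst K $ i) / real (m i))"
  unfolding box_vol_def grid_def by (simp only: fst_conv snd_conv vec_lambda_beta gstep)

lemma grid_vol_sum:
  assumes "\<And>i. m i > 0"
  shows "(\<Sum>j\<in>{j. \<forall>i. j i < m i}. box_vol (grid K m j)) = box_vol K"
proof -
  have J: "{j. \<forall>i. j i < m i} = Pi\<^sub>E UNIV (\<lambda>i. {..<m i})" by (auto simp: PiE_UNIV_domain)
  have "card {j. \<forall>i. j i < m i} = (\<Prod>i\<in>UNIV. m i)" unfolding J by (simp add: card_PiE)
  then have "(\<Sum>j\<in>{j. \<forall>i. j i < m i}. box_vol (grid K m j))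
      = real (\<Prod>i\<in>UNIV. m i) * (\<Prod>i\<in>UNIV. (snd K $ i - fst K $ i) / real (m i))"
    by (simp add: grid_vol)
  also have "\<dots> = (\<Prod>i\<in>UNIV. real (m i) * ((snd K $ i - fst K $ i) / real (m i)))"
    by (simp add: prod.distrib[symmetric] of_nat_prod)
  also have "\<dots> = box_vol K" unfolding box_vol_def
    using assms by (intro prod.cong) (auto simp: field_simps)
  finally show ?thesis .
qed

lemma grid_width:
  assumes "\<And>i. (snd K $ i - fst K $ i) / real (m i) \<le> B"
  shows "box_width (grid K m j) \<le> B"
proof -
  have "box_width (grid K m j) = Max (range (\<lambda>i. (snd K $ i - fst K $ i) / real (m i)))"
    unfolding box_width_def grid_def by (simp only: fst_conv snd_conv vec_lambda_beta gstep)
  also have "\<dots> \<le> B" using assms by (subst Max_le_iff) auto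
  finally show ?thesis .
qed

lemma box_width_nonneg:
  assumes "nondeg K" shows "0 \<le> box_width K"
proof -
  obtain i :: 'a where True by blast
  have "snd K $ i - fst K $ i \<le> box_width K" unfolding box_width_def by (rule Max_ge) auto
  then show ?thesis using assms by (simp add: nondeg_def) (smt (verit))
qed

lemma box_vol_pos: "nondeg K \<Longrightarrow> 0 < box_vol K"
  unfolding box_vol_def nondeg_def by (intro prod_pos) auto

lemma eta_nonneg:
  assumes "interval_enclosure \<Omega> f F" "nondeg K" "box_set K \<subseteq> box_set \<Omega>"
  shows "0 \<le> iwidth (F K) * box_vol K"
proof -
  have "fst (F K) \<le> snd (F K)" using assms nondeg_is_box unfolding interval_enclosure_def by blast
  then show ?thesis using box_vol_pos[OF assms(2)] by (simp add: iwidth_def)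
qed

lemma hoelder_refine_props:
  assumes enc: "interval_enclosure \<Omega> f F" and hol: "hoelder_continuous \<Omega> F C \<gamma>"
    and C: "C > 0" and g: "\<gamma> > 0" and r: "\<rho> > 0"
    and K: "nondeg K" "box_set K \<subseteq> box_set \<Omega>"
  shows "part (box_set K) (hoelder_refine \<rho> C \<gamma> F K)"
    "(\<Sum>K'\<in>hoelder_refine \<rho> C \<gamma> F K. iwidth (F K') * box_vol K') \<le> \<rho> * (iwidth (F K) * box_vol K)"
proof -
  define \<eta> where "\<eta> = iwidth (F K) * box_vol K"
  have \<eta>0: "0 \<le> \<eta>" unfolding \<eta>_def by (rule eta_nonneg[OF enc K])
  have "part (box_set K) (hoelder_refine \<rho> C \<gamma> F K) \<and>
    (\<Sum>K'\<in>hoelder_refine \<rho> C \<gamma> F K. iwidth (F K') * box_vol K') \<le> \<rho> * \<eta>"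
  proof (cases "\<eta> = 0")
    case True
    then have R: "hoelder_refine \<rho> C \<gamma> F K = {K}" by (simp add: hoelder_refine_def \<eta>_def)
    have "part (box_set K) {K}" unfolding part_def using K by auto
    then show ?thesis using R True by (simp add: \<eta>_def[symmetric])
  next
    case False
    then have \<eta>p: "\<eta> > 0" using \<eta>0 by simp
    have vp: "box_vol K > 0" by (rule box_vol_pos[OF K(1)])
    define X where "X = C * box_vol K / (\<rho> * \<eta>)"
    have Xp: "X > 0" unfolding X_def using C vp r \<eta>p by simp
    define s where "s = X powr (1 / \<gamma>)"
    have sp: "s > 0" unfolding s_def using Xp by simp
    define m where "m = (\<lambda>i. nat \<lceil>(snd K $ i - fst K $ i) * s\<rceil>)"
    have l0: "\<And>i. snd K $ i - fst K $ i > 0" using K(1) by (simp add: nondeg_def)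
    have mge: "\<And>i. (snd K $ i - fst K $ i) * s \<le> real (m i)" unfolding m_def by (rule real_nat_ceiling_ge)
    have mp: "\<And>i. m i > 0"
    proof -
      fix i have "0 < (snd K $ i - fst K $ i) * s" using l0 sp by simp
      then show "m i > 0" unfolding m_def by simp
    qed
    have R: "hoelder_refine \<rho> C \<gamma> F K = grid K m ` {j. \<forall>i. j i < m i}"
      using False unfolding hoelder_refine_def grid_def Let_def m_def s_def X_def \<eta>_def by simp
    have lm: "\<And>i. (snd K $ i - fst K $ i) / real (m i) \<le> 1 / s"
    proof -
      fix i
      have "(snd K $ i - fst K $ i) / real (m i) \<le> (snd K $ i - fst K $ i) / ((snd K $ i - fst K $ i) * s)"
        using mge[of i] l0[of i] sp mp[of i] by (intro divide_left_mono) auto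
      also have "\<dots> = 1 / s" using l0[of i] by simp
      finally show "(snd K $ i - fst K $ i) / real (m i) \<le> 1 / s" .
    qed
    have spow: "(1 / s) powr \<gamma> = 1 / X"
    proof -
      have "s powr \<gamma> = X" unfolding s_def using g Xp by (simp add: powr_powr)
      then show ?thesis using sp by (simp add: powr_divide)
    qed
    have child: "iwidth (F (grid K m j)) * box_vol (grid K m j) \<le> (\<rho> * \<eta> / box_vol K) * box_vol (grid K m j)"
      if j: "j \<in> {j. \<forall>i. j i < m i}" for j
    proof -
      have p: "part (box_set K) (grid K m ` {j. \<forall>i. j i < m i})" by (rule grid_part[OF K(1) mp])
      then have nd: "nondeg (grid K m j)" and sb: "box_set (grid K m j) \<subseteq> box_set K"
        using j unfolding part_def by auto
      have "iwidth (F (grid K m j)) \<le> C * box_width (grid K m j) powr \<gamma>"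
        using hol nd sb K(2) nondeg_is_box unfolding hoelder_continuous_def by blast
      also have "\<dots> \<le> C * (1 / s) powr \<gamma>"
        using C g box_width_nonneg[OF nd] grid_width[OF lm] by (intro mult_left_mono powr_mono2) auto
      also have "\<dots> = \<rho> * \<eta> / box_vol K" unfolding spow X_def using C by simp
      finally show ?thesis using box_vol_pos[OF nd] by (intro mult_right_mono) auto
    qed
    have "(\<Sum>K'\<in>hoelder_refine \<rho> C \<gamma> F K. iwidth (F K') * box_vol K')
        \<le> (\<Sum>j\<in>{j. \<forall>i. j i < m i}. iwidth (F (grid K m j)) * box_vol (grid K m j))"
      unfolding R
    proof (rule order_trans[OF sum_image_le])
      show "finite {j. \<forall>i. j i < m i}"
      proof -
        have "{j. \<forall>i. j i < m i} = Pi\<^sub>E UNIV (\<lambda>i. {..<m i})" by (auto simp: PiE_UNIV_domain)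
        then show ?thesis by (simp add: finite_PiE)
      qed
      show "\<And>j. j \<in> {j. \<forall>i. j i < m i} \<Longrightarrow> 0 \<le> iwidth (F (grid K m j)) * box_vol (grid K m j)"
      proof -
        fix j assume j: "j \<in> {j. \<forall>i. j i < m i}"
        have p: "part (box_set K) (grid K m ` {j. \<forall>i. j i < m i})" by (rule grid_part[OF K(1) mp])
        then have nd: "nondeg (grid K m j)" and sb: "box_set (grid K m j) \<subseteq> box_set K"
          using j unfolding part_def by auto
        show "0 \<le> iwidth (F (grid K m j)) * box_vol (grid K m j)"
          using eta_nonneg[OF enc nd] sb K(2) by blast
      qed
    qed (simp add: o_def)
    also have "\<dots> \<le> (\<Sum>j\<in>{j. \<forall>i. j i < m i}. (\<rho> * \<eta> / box_vol K) * box_vol (grid K m j))"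
      by (rule sum_mono) (rule child)
    also have "\<dots> = (\<rho> * \<eta> / box_vol K) * box_vol K"
      by (simp only: sum_distrib_left[symmetric] grid_vol_sum[OF mp])
    also have "\<dots> = \<rho> * \<eta>" using vp by simp
    finally show ?thesis using R grid_part[OF K(1) mp] by simp
  qed
  then show "part (box_set K) (hoelder_refine \<rho> C \<gamma> F K)"
    "(\<Sum>K'\<in>hoelder_refine \<rho> C \<gamma> F K. iwidth (F K') * box_vol K') \<le> \<rho> * (iwidth (F K) * box_vol K)"
    unfolding \<eta>_def by auto
qed



lemma sum_Un_le':
  fixes g :: "'a \<Rightarrow> real"
  assumes "finite A" "finite B" "\<And>x. x \<in> A \<union> B \<Longrightarrow> 0 \<le> g x"
  shows "sum g (A \<union> B) \<le> sum g A + sum g B"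
proof -
  have "0 \<le> sum g (A \<inter> B)" using assms by (intro sum_nonneg) auto
  then show ?thesis using sum_Un[OF assms(1,2), of g] by simp
qed

lemma sum_UN_le':
  fixes g :: "'a \<Rightarrow> real"
  assumes "finite A" "\<And>a. a \<in> A \<Longrightarrow> finite (B a)" "\<And>x. x \<in> \<Union>(B ` A) \<Longrightarrow> 0 \<le> g x"
  shows "sum g (\<Union>(B ` A)) \<le> (\<Sum>a\<in>A. sum g (B a))"
  using assms
proof (induction A rule: finite_induct)
  case empty then show ?case by simp
next
  case (insert a A)
  have "sum g (\<Union>(B ` insert a A)) = sum g (B a \<union> \<Union>(B ` A))" by simp
  also have "\<dots> \<le> sum g (B a) + sum g (\<Union>(B ` A))"
    using insert by (intro sum_Un_le') auto
  also have "\<dots> \<le> sum g (B a) + (\<Sum>a\<in>A. sum g (B a))"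
    using insert by auto
  finally show ?case using insert by simp
qed

lemma quad_bounds:
  fixes lo hi :: real and f :: "'a \<Rightarrow> real"
  assumes "\<And>w x. (w, x) \<in> set L \<Longrightarrow> 0 < w \<and> lo \<le> f x \<and> f x \<le> hi"
  shows "lo * sum_list (map fst L) \<le> sum_list (map (\<lambda>(w, x). w * f x) L) \<and>
         sum_list (map (\<lambda>(w, x). w * f x) L) \<le> hi * sum_list (map fst L)"
  using assms
proof (induction L)
  case Nil then show ?case by simp
next
  case (Cons p L)
  obtain w x where p: "p = (w, x)" by fastforce
  have h: "0 < w" "lo \<le> f x" "f x \<le> hi" using Cons.prems[of w x] p by auto
  have "w * lo \<le> w * f x" "w * f x \<le> w * hi" using h by auto
  moreover have "lo * sum_list (map fst L) \<le> sum_list (map (\<lambda>(w, x). w * f x) L) \<and>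
         sum_list (map (\<lambda>(w, x). w * f x) L) \<le> hi * sum_list (map fst L)"
    using Cons by auto
  ultimately show ?case using p by (simp add: algebra_simps)
qed

lemma box_err:
  assumes lq: "local_quad_rule Rq" and pw: "positive_weights Rq" and ex: "exact_for_constants Rq"
    and cf: "continuous_on (box_set \<Omega>) f" and enc: "interval_enclosure \<Omega> f F"
    and K: "nondeg K" "box_set K \<subseteq> box_set \<Omega>"
  shows "\<bar>integral (box_set K) f - quad Rq f K\<bar> \<le> iwidth (F K) * box_vol K"
proof -
  define lo where "lo = fst (F K)"
  define hi where "hi = snd (F K)"
  have ib: "is_box K" using K(1) by (rule nondeg_is_box)
  have fb: "\<And>x. x \<in> box_set K \<Longrightarrow> lo \<le> f x \<and> f x \<le> hi"
    using enc ib K(2) unfolding interval_enclosure_def lo_def hi_def iset_def by fastforce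
  have int: "f integrable_on box_set K" unfolding box_set_def
    using cf K(2) by (intro integrable_continuous) (auto simp: box_set_def intro: continuous_on_subset)
  have ne: "box_set K \<noteq> {}" using nondeg_interior_ne[OF K(1)] by auto
  have cont: "Henstock_Kurzweil_Integration.content (box_set K) = box_vol K"
    using ne unfolding box_set_def box_vol_def by (simp add: content_cbox_cart)
  have i1: "lo * box_vol K \<le> integral (box_set K) f"
  proof -
    have "integral (box_set K) (\<lambda>x. lo) \<le> integral (box_set K) f"
      using fb int by (intro integral_le) (auto simp: box_set_def)
    then show ?thesis using cont by (simp add: box_set_def mult.commute)
  qed
  have i2: "integral (box_set K) f \<le> hi * box_vol K"
  proof -
    have "integral (box_set K) f \<le> integral (box_set K) (\<lambda>x. hi)"
      using fb int by (intro integral_le) (auto simp: box_set_def)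
    then show ?thesis using cont by (simp add: box_set_def mult.commute)
  qed
  have qb: "lo * sum_list (map fst (Rq K)) \<le> quad Rq f K \<and> quad Rq f K \<le> hi * sum_list (map fst (Rq K))"
    unfolding quad_def
  proof (rule quad_bounds)
    fix w x assume wx: "(w, x) \<in> set (Rq K)"
    then have "x \<in> box_set K" using lq ib unfolding local_quad_rule_def by fastforce
    moreover have "0 < w" using pw ib wx unfolding positive_weights_def by fastforce
    ultimately show "0 < w \<and> lo \<le> f x \<and> f x \<le> hi" using fb by blast
  qed
  have sw: "sum_list (map fst (Rq K)) = box_vol K" using ex ib unfolding exact_for_constants_def by blast
  show ?thesis using i1 i2 qb sw unfolding iwidth_def lo_def[symmetric] hi_def[symmetric]
    by (simp add: left_diff_distrib abs_le_iff)
qed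



theorem theorem4p1:
  fixes \<theta> \<rho> C \<gamma> :: real
    and Rq :: "'n::finite box \<Rightarrow> (real \<times> (real^'n)) list"
    and \<Omega> :: "'n box"
    and f :: "real^'n \<Rightarrow> real"
    and F :: "'n box \<Rightarrow> ival"
  assumes "0 < \<theta>" "\<theta> < 1" "0 < \<rho>" "\<rho> < 1"
    and "local_quad_rule Rq" "positive_weights Rq" "exact_for_constants Rq"
    and "\<forall>i. fst \<Omega> $ i < snd \<Omega> $ i"
    and "continuous_on (box_set \<Omega>) f"
    and "interval_enclosure \<Omega> f F"
    and "hoelder_continuous \<Omega> F C \<gamma>" "C > 0" "0 < \<gamma>" "\<gamma> \<le> 1"
  shows "(\<forall>n. \<bar>integral (box_set \<Omega>) f
               - adaquad_Q Rq f (dorfler \<theta>) (hoelder_refine \<rho> C \<gamma> F) F \<Omega> n\<bar>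
             \<le> adaquad_eta (dorfler \<theta>) (hoelder_refine \<rho> C \<gamma> F) F \<Omega> n
           \<and> adaquad_eta (dorfler \<theta>) (hoelder_refine \<rho> C \<gamma> F) F \<Omega> (Suc n)
             \<le> (1 - \<theta> * (1 - \<rho>)) * adaquad_eta (dorfler \<theta>) (hoelder_refine \<rho> C \<gamma> F) F \<Omega> n)
         \<and> adaquad_eta (dorfler \<theta>) (hoelder_refine \<rho> C \<gamma> F) F \<Omega> \<longlonglongrightarrow> 0"
proof -
  note th0 = assms(1) and th1 = assms(2) and r0 = assms(3) and r1 = assms(4)
  note lq = assms(5) and pw = assms(6) and ex = assms(7) and om = assms(8) and cf = assms(9)
  note enc = assms(10) and hol = assms(11) and C = assms(12) and g = assms(13)
  let ?M = "dorfler \<theta>" and ?R = "hoelder_refine \<rho> C \<gamma> F"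
  define P where "P = adaquad_partition ?M ?R F \<Omega>"
  define \<eta> where "\<eta> = (\<lambda>K. iwidth (F K) * box_vol K)"
  define Pm where "Pm = (\<lambda>n. ?M (P n) \<eta>)"
  have Psuc: "\<And>n. P (Suc n) = (P n - Pm n) \<union> \<Union>(?R ` Pm n)"
    by (simp add: P_def Pm_def \<eta>_def Let_def)
  have etaP: "\<And>n. adaquad_eta ?M ?R F \<Omega> n = sum \<eta> (P n)"
    by (simp add: adaquad_eta_def P_def \<eta>_def)
  have QP: "\<And>n. adaquad_Q Rq f ?M ?R F \<Omega> n = (\<Sum>K\<in>P n. quad Rq f K)"
    by (simp add: adaquad_Q_def P_def)
  have ndO: "nondeg \<Omega>" using om by (simp add: nondeg_def)
  have inv: "part (box_set \<Omega>) (P n) \<and> Pm n \<subseteq> P n \<and> \<theta> * sum \<eta> (P n) \<le> sum \<eta> (Pm n)" for n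
  proof -
    have pt: "part (box_set \<Omega>) (P n)"
    proof (induction n)
      case 0
      show ?case using ndO by (simp add: P_def part_def)
    next
      case (Suc n)
      have nn: "\<And>K. K \<in> P n \<Longrightarrow> 0 \<le> \<eta> K"
        using Suc eta_nonneg[OF enc] unfolding part_def \<eta>_def by auto
      have sub: "Pm n \<subseteq> P n" unfolding Pm_def
        using dorfler_props(1)[where P="P n" and \<eta>=\<eta> and \<theta>=\<theta>] Suc nn th1 unfolding part_def by auto
      show ?case unfolding Psuc
      proof (rule part_refine[OF Suc sub])
        fix K assume "K \<in> Pm n"
        then have "K \<in> P n" using sub by blast
        then have "nondeg K" "box_set K \<subseteq> box_set \<Omega>" using Suc unfolding part_def by auto
        then show "part (box_set K) (?R K)"
          by (rule hoelder_refine_props(1)[OF enc hol C g r0])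
      qed
    qed
    have nn: "\<And>K. K \<in> P n \<Longrightarrow> 0 \<le> \<eta> K"
      using pt eta_nonneg[OF enc] unfolding part_def \<eta>_def by auto
    have fin: "finite (P n)" using pt unfolding part_def by blast
    show ?thesis using pt dorfler_props[OF fin nn, where \<theta>=\<theta>] th1 unfolding Pm_def by auto
  qed
  have nnall: "\<And>n K. K \<in> P n \<Longrightarrow> 0 \<le> \<eta> K"
  proof -
    fix n K assume "K \<in> P n"
    moreover have "part (box_set \<Omega>) (P n)" using inv by blast
    ultimately have "nondeg K" "box_set K \<subseteq> box_set \<Omega>" unfolding part_def by auto
    then show "0 \<le> \<eta> K" unfolding \<eta>_def by (rule eta_nonneg[OF enc])
  qed
  have etanonneg: "\<And>n. 0 \<le> sum \<eta> (P n)" using nnall by (simp add: sum_nonneg)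
  have err: "\<bar>integral (box_set \<Omega>) f - (\<Sum>K\<in>P n. quad Rq f K)\<bar> \<le> sum \<eta> (P n)" for n
  proof -
    have pt: "part (box_set \<Omega>) (P n)" using inv by blast
    have int: "f integrable_on box_set \<Omega>" unfolding box_set_def
      using cf by (intro integrable_continuous) (simp add: box_set_def)
    have "integral (box_set \<Omega>) f = (\<Sum>S\<in>box_set ` P n. integral S f)"
      by (rule integral_combine_division_topdown[OF int part_division[OF pt]])
    also have "\<dots> = (\<Sum>K\<in>P n. integral (box_set K) f)"
      by (rule sum.reindex[OF part_inj[OF pt], unfolded o_def])
    finally have "integral (box_set \<Omega>) f - (\<Sum>K\<in>P n. quad Rq f K) = (\<Sum>K\<in>P n. integral (box_set K) f - quad Rq f K)"
      by (simp add: sum_subtractf)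
    then have "\<bar>integral (box_set \<Omega>) f - (\<Sum>K\<in>P n. quad Rq f K)\<bar> \<le> (\<Sum>K\<in>P n. \<bar>integral (box_set K) f - quad Rq f K\<bar>)"
      by (simp add: sum_abs)
    also have "\<dots> \<le> sum \<eta> (P n)"
    proof (rule sum_mono)
      fix K assume "K \<in> P n"
      then show "\<bar>integral (box_set K) f - quad Rq f K\<bar> \<le> \<eta> K"
        using pt box_err[OF lq pw ex cf enc] unfolding part_def \<eta>_def by auto
    qed
    finally show ?thesis .
  qed
  have contr: "sum \<eta> (P (Suc n)) \<le> (1 - \<theta> * (1 - \<rho>)) * sum \<eta> (P n)" for n
  proof -
    have pt: "part (box_set \<Omega>) (P n)" and sub: "Pm n \<subseteq> P n" and dor: "\<theta> * sum \<eta> (P n) \<le> sum \<eta> (Pm n)"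
      using inv by blast+
    have fin: "finite (P n)" using pt unfolding part_def by blast
    have finm: "finite (Pm n)" using fin sub finite_subset by blast
    have PK: "\<And>K. K \<in> P n \<Longrightarrow> nondeg K \<and> box_set K \<subseteq> box_set \<Omega>" using pt unfolding part_def by blast
    have RK: "\<And>K. K \<in> Pm n \<Longrightarrow> part (box_set K) (?R K) \<and> sum \<eta> (?R K) \<le> \<rho> * \<eta> K"
    proof -
      fix K assume "K \<in> Pm n"
      then have "nondeg K" "box_set K \<subseteq> box_set \<Omega>" using sub PK by blast+
      from hoelder_refine_props[OF enc hol C g r0 this] show "part (box_set K) (?R K) \<and> sum \<eta> (?R K) \<le> \<rho> * \<eta> K"
        unfolding \<eta>_def by simp
    qed
    have ptS: "part (box_set \<Omega>) (P (Suc n))" using inv by blast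
    have nnS: "\<And>K. K \<in> P (Suc n) \<Longrightarrow> 0 \<le> \<eta> K" using nnall by blast
    have finR: "\<And>K. K \<in> Pm n \<Longrightarrow> finite (?R K)" using RK unfolding part_def by blast
    have "sum \<eta> (P (Suc n)) \<le> sum \<eta> (P n - Pm n) + sum \<eta> (\<Union>(?R ` Pm n))"
      unfolding Psuc using fin finm finR nnS[unfolded Psuc]
      by (intro sum_Un_le') auto
    also have "sum \<eta> (\<Union>(?R ` Pm n)) \<le> (\<Sum>K\<in>Pm n. sum \<eta> (?R K))"
      using finm finR nnS[unfolded Psuc] by (intro sum_UN_le') auto
    also have "\<dots> \<le> (\<Sum>K\<in>Pm n. \<rho> * \<eta> K)" using RK by (intro sum_mono) auto
    also have "sum \<eta> (P n - Pm n) = sum \<eta> (P n) - sum \<eta> (Pm n)"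
      using fin sub by (simp add: sum_diff)
    finally have "sum \<eta> (P (Suc n)) \<le> sum \<eta> (P n) - (1 - \<rho>) * sum \<eta> (Pm n)"
      by (simp add: sum_distrib_left[symmetric] algebra_simps)
    also have "\<dots> \<le> sum \<eta> (P n) - (1 - \<rho>) * (\<theta> * sum \<eta> (P n))"
      using dor r1 by (intro diff_left_mono mult_left_mono) auto
    finally show ?thesis by (simp add: algebra_simps)
  qed
  define q where "q = 1 - \<theta> * (1 - \<rho>)"
  have q0: "0 \<le> q" and q1: "q < 1"
  proof -
    have "\<theta> * (1 - \<rho>) < 1 * 1" using th0 th1 r0 r1 by (intro mult_strict_mono) auto
    moreover have "0 < \<theta> * (1 - \<rho>)" using th0 r1 by simp
    ultimately show "0 \<le> q" "q < 1" unfolding q_def by auto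
  qed
  have geo: "sum \<eta> (P n) \<le> q ^ n * sum \<eta> (P 0)" for n
  proof (induction n)
    case 0 then show ?case by simp
  next
    case (Suc n)
    have "sum \<eta> (P (Suc n)) \<le> q * sum \<eta> (P n)" using contr q_def by simp
    also have "\<dots> \<le> q * (q ^ n * sum \<eta> (P 0))" using Suc q0 by (intro mult_left_mono) auto
    finally show ?case by simp
  qed
  have lim: "(\<lambda>n. sum \<eta> (P n)) \<longlonglongrightarrow> 0"
  proof (rule real_tendsto_sandwich[where f="\<lambda>n. 0" and h="\<lambda>n. q ^ n * sum \<eta> (P 0)"])
    show "\<forall>\<^sub>F n in sequentially. 0 \<le> sum \<eta> (P n)" using etanonneg by simp
    show "\<forall>\<^sub>F n in sequentially. sum \<eta> (P n) \<le> q ^ n * sum \<eta> (P 0)" using geo by simp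
    show "(\<lambda>n. 0::real) \<longlonglongrightarrow> 0" by simp
    have "(\<lambda>n. q ^ n) \<longlonglongrightarrow> 0" using q0 q1 by (intro LIMSEQ_power_zero) auto
    then show "(\<lambda>n. q ^ n * sum \<eta> (P 0)) \<longlonglongrightarrow> 0" using tendsto_mult_left_zero by blast
  qed
  show ?thesis unfolding etaP QP using err contr lim by simp
qed


end
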